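(* Let $F:\mathbb{R}^d\to\mathbb{R}$ be continuously differentiable with $L$-Lipschitz gradient and strongly convex with parameter $c>0$, i.e. $F(\bar w)\ge F(w)+\nabla F(w)^\top(\bar w-w)+\tfrac c2\|\bar w-w\|_2^2$ for all $w,\bar w$; let $w_*$ be its unique minimizer and $F_*=F(w_* )$. Consider the low-precision SGD iteration $w_{k+1}=w_k-\bar\alpha\,\tilde g(w_k,\xi_k)$ with fixed stepsize $\bar\alpha$ and $\tilde g(w_k,\xi_k)=q_k\,g(w_k,\xi_k)+\varepsilon_k$. Assume: (a) the iterates lie in an open set on which $F$ is bounded below by $F_{\inf}=F_*$; (b) there exist scalars $\mu_G\ge\mu>0$ such that for all $k$, $\nabla F(w_k)^\top\mathbb{E}_{\xi_k}[\tilde g(w_k,\xi_k)]\ge q_{\min}\mu\|\nabla F(w_k)\|_2^2$ and $\|\mathbb{E}_{\xi_k}[\tilde g(w_k,\xi_k)]\|_2\le q_{\max}\mu_G\|\nabla F(w_k)\|_2$; (c) there exist scalars $\tilde M\ge0$, $\tilde M_V\ge0$ such that for all $k$, $\mathbb{E}_{\xi_k}\|\tilde g(w_k,\xi_k)\|_2^2-\|\mathbb{E}_{\xi_k}[\tilde g(w_k,\xi_k)]\|_2^2\le\tilde M+\tilde M_V\|\nabla F(w_k)\|_2^2$. Let $\mu_q:=q_{\min}\mu$, $\tilde M_G:=\tilde M_V+q_{\max}^2\mu_G^2$, and suppose $0<\bar\alpha\le\frac{\mu_q}{L\tilde M_G}$. Then for all $k\in\mathbb{N}$, \[ \mathbb{E}[F(w_k)-F_*]\le\frac{\bar\alpha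 L\tilde M}{2c\mu_q}+(1-\bar\alpha c\mu_q)^{k-1}\Big(F(w_1)-F_*-\frac{\bar\alpha L\tilde M}{2c\mu_q}\Big), \] and the right-hand side converges as $k\to\infty$ to $\frac{\bar\alpha L\tilde M}{2c\mu_q}=\frac{1}{q_{\min}}\frac{\bar\alpha L\tilde M}{2c\mu}$.
   Context: The objective is $F(w)=\mathbb{E}_{\xi\sim\mathcal D}[\ell(\xi,w)]$, $w_1$ is a given initial point. At iteration $k$, $\xi_k$ is drawn i.i.d. from $\mathcal D$, $g(w_k,\xi_k)=\nabla F(w_k;\xi_k)$, $q_k\in[q_{\min},q_{\max}]\subset(0,1]$ with $q_{\min}>0$ is a shrinkage factor, and $\varepsilon_k$ is quantization noise with $\mathbb{E}[\varepsilon_k\mid\mathcal F_k]=0$ and $\mathbb{E}\|\varepsilon_k\|_2^2\le\sigma_\varepsilon^2$, $\mathcal F_k$ being the $\sigma$-algebra of all randomness up to iteration $k$. $\mathbb{E}_{\xi_k}[\cdot]$ denotes expectation over $(\xi_k,q_k,\varepsilon_k)$ conditional on $w_k$, and $\mathbb{E}[\cdot]$ is total expectation over all randomness. *)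

theory Defs
  imports "HOL-Probability.Probability"
begin

text \<open>Conditional expectation of a vector-valued random variable given the
sub-sigma-algebra G, taken componentwise along the standard basis
(the library only provides the real-valued conditional expectation).\<close>
definition vcond_exp :: "'a measure \<Rightarrow> 'a measure \<Rightarrow> ('a \<Rightarrow> 'v::euclidean_space) \<Rightarrow> 'a \<Rightarrow> 'v" where
  "vcond_exp M G X \<omega> = (\<Sum>b\<in>Basis. real_cond_exp M G (\<lambda>x. X x \<bullet> b) \<omega> *\<^sub>R b)"

end

theory Submission imports Defs begin

lemma descent:
  fixes F :: "'v::euclidean_space \<Rightarrow> real" and gradF :: "'v \<Rightarrow> 'v"
  assumes grad: "\<And>v. (F has_derivative (\<lambda>h. gradF v \<bullet> h)) (at v)"
    and lip: "\<And>v u. norm (gradF v - gradF u) \<le> L * norm (v - u)"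
  shows "F u \<le> F v + gradF v \<bullet> (u - v) + L / 2 * (norm (u - v))\<^sup>2"
proof -
  define h where "h = u - v"
  define \<psi> where "\<psi> = (\<lambda>t::real. - (F (v + t *\<^sub>R h) - t * (gradF v \<bullet> h) - L / 2 * t\<^sup>2 * (norm h)\<^sup>2))"
  have "\<psi> 0 \<le> \<psi> 1"
  proof (rule DERIV_nonneg_imp_nondecreasing[of 0 1])
    fix t :: real assume t: "0 \<le> t" "t \<le> 1"
    have d1: "((\<lambda>t. v + t *\<^sub>R h) has_derivative (\<lambda>s. s *\<^sub>R h)) (at t)"
      by (auto intro!: derivative_eq_intros)
    have d2: "((\<lambda>t. F (v + t *\<^sub>R h)) has_derivative (\<lambda>s. gradF (v + t *\<^sub>R h) \<bullet> (s *\<^sub>R h))) (at t)"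
      using has_derivative_compose[OF d1 grad] by simp
    have d3: "((\<lambda>t. F (v + t *\<^sub>R h)) has_real_derivative (gradF (v + t *\<^sub>R h) \<bullet> h)) (at t)"
      using d2 by (simp add: has_field_derivative_def mult.commute[of _ "gradF (v + t *\<^sub>R h) \<bullet> h"])
    have "(\<psi> has_real_derivative - (gradF (v + t *\<^sub>R h) \<bullet> h - gradF v \<bullet> h - L * t * (norm h)\<^sup>2)) (at t)"
      unfolding \<psi>_def
      by (rule derivative_eq_intros d3 refl | simp)+
    moreover have "gradF (v + t *\<^sub>R h) \<bullet> h - gradF v \<bullet> h \<le> L * t * (norm h)\<^sup>2"
    proof -
      have "gradF (v + t *\<^sub>R h) \<bullet> h - gradF v \<bullet> h = (gradF (v + t *\<^sub>R h) - gradF v) \<bullet> h"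
        by (simp add: inner_diff_left)
      also have "\<dots> \<le> norm (gradF (v + t *\<^sub>R h) - gradF v) * norm h"
        by (rule norm_cauchy_schwarz)
      also have "\<dots> \<le> (L * norm (t *\<^sub>R h)) * norm h"
        using lip[of "v + t *\<^sub>R h" v] by (intro mult_right_mono) auto
      also have "\<dots> = L * t * (norm h)\<^sup>2" using t by (simp add: power2_eq_square)
      finally show ?thesis .
    qed
    ultimately show "\<exists>y. (\<psi> has_real_derivative y) (at t) \<and> 0 \<le> y" by force
  qed simp
  then show ?thesis unfolding \<psi>_def h_def by simp
qed

lemma grad_sq_bound:
  fixes F :: "'v::euclidean_space \<Rightarrow> real" and gradF :: "'v \<Rightarrow> 'v"
  assumes grad: "\<And>v. (F has_derivative (\<lambda>h. gradF v \<bullet> h)) (at v)"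
    and lip: "\<And>v u. norm (gradF v - gradF u) \<le> L * norm (v - u)"
    and L: "L > 0" and mn: "\<And>v. F ws \<le> F v"
  shows "(norm (gradF v))\<^sup>2 \<le> 2 * L * (F v - F ws)"
proof -
  let ?u = "v - (1/L) *\<^sub>R gradF v"
  have "F ?u \<le> F v + gradF v \<bullet> (?u - v) + L / 2 * (norm (?u - v))\<^sup>2"
    by (rule descent[OF grad lip])
  also have "\<dots> = F v - (norm (gradF v))\<^sup>2 / (2 * L)"
  proof -
    have a: "gradF v \<bullet> (?u - v) = - (norm (gradF v))\<^sup>2 / L"
      by (simp add: power2_norm_eq_inner)
    have b: "(norm (?u - v))\<^sup>2 = (norm (gradF v))\<^sup>2 / L\<^sup>2"
      using L by (simp add: power_divide)
    have c: "L / 2 * ((norm (gradF v))\<^sup>2 / L\<^sup>2) = (norm (gradF v))\<^sup>2 / (2 * L)"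
      using L by (simp add: power2_eq_square)
    show ?thesis unfolding a b c by (simp add: field_simps)
  qed
  finally have "F ws \<le> F v - (norm (gradF v))\<^sup>2 / (2 * L)" using mn[of ?u] by linarith
  then show ?thesis using L by (simp add: field_simps)
qed

lemma pl_ineq:
  fixes F :: "'v::real_inner \<Rightarrow> real" and gradF :: "'v \<Rightarrow> 'v"
  assumes strong: "\<And>v u. F u \<ge> F v + gradF v \<bullet> (u - v) + c / 2 * (norm (u - v))\<^sup>2"
    and c: "c > 0"
  shows "(norm (gradF v))\<^sup>2 \<ge> 2 * c * (F v - F ws)"
proof -
  let ?d = "ws - v" and ?g = "gradF v"
  have "0 \<le> (norm (?g + c *\<^sub>R ?d))\<^sup>2" by simp
  also have "\<dots> = (norm ?g)\<^sup>2 + 2 * c * (?g \<bullet> ?d) + c\<^sup>2 * (norm ?d)\<^sup>2"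
    unfolding power2_norm_eq_inner by (simp add: inner_add_left inner_add_right inner_commute power2_eq_square algebra_simps)
  finally have 1: "0 \<le> (norm ?g)\<^sup>2 + 2 * c * (?g \<bullet> ?d) + c\<^sup>2 * (norm ?d)\<^sup>2" .
  have 2: "F ws \<ge> F v + ?g \<bullet> ?d + c / 2 * (norm ?d)\<^sup>2" by (rule strong)
  have "2 * c * (F v - F ws) \<le> 2 * c * (- (?g \<bullet> ?d) - c / 2 * (norm ?d)\<^sup>2)"
    using 2 c by (intro mult_left_mono) auto
  also have "\<dots> = - 2 * c * (?g \<bullet> ?d) - c\<^sup>2 * (norm ?d)\<^sup>2" by (simp add: power2_eq_square algebra_simps)
  finally show ?thesis using 1 by linarith
qed

lemma c_le_L:
  fixes F :: "'v::euclidean_space \<Rightarrow> real" and gradF :: "'v \<Rightarrow> 'v"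
  assumes grad: "\<And>v. (F has_derivative (\<lambda>h. gradF v \<bullet> h)) (at v)"
    and lip: "\<And>v u. norm (gradF v - gradF u) \<le> L * norm (v - u)"
    and strong: "\<And>v u. F u \<ge> F v + gradF v \<bullet> (u - v) + c / 2 * (norm (u - v))\<^sup>2"
  shows "c \<le> L"
proof -
  obtain b :: 'v where b: "b \<in> Basis" using nonempty_Basis by blast
  have nb: "norm b = 1" using b by simp
  have "F b \<le> F 0 + gradF 0 \<bullet> (b - 0) + L / 2 * (norm (b - 0))\<^sup>2" by (rule descent[OF grad lip])
  moreover have "F b \<ge> F 0 + gradF 0 \<bullet> (b - 0) + c / 2 * (norm (b - 0))\<^sup>2" by (rule strong)
  ultimately show ?thesis using nb by simp
qed

lemma inner_abs_bound:
  fixes x y :: "'v::real_inner"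
  shows "\<bar>x \<bullet> y\<bar> \<le> (norm x)\<^sup>2 + (norm y)\<^sup>2"
proof -
  have "\<bar>x \<bullet> y\<bar> \<le> norm x * norm y" by (rule Cauchy_Schwarz_ineq2)
  also have "\<dots> \<le> (norm x)\<^sup>2 + (norm y)\<^sup>2"
  proof -
    have a: "(norm x - norm y)\<^sup>2 = (norm x)\<^sup>2 - 2 * norm x * norm y + (norm y)\<^sup>2"
      by (simp add: power2_diff)
    have "0 \<le> (norm x - norm y)\<^sup>2" by simp
    moreover have "0 \<le> norm x * norm y" by simp
    ultimately show ?thesis unfolding a by linarith
  qed
  finally show ?thesis .
qed


lemma norm_prod_bound:
  fixes a b :: real
  assumes "0 \<le> a" "0 \<le> b"
  shows "a * b \<le> a\<^sup>2 + b\<^sup>2"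
proof -
  have e: "(a - b)\<^sup>2 = a\<^sup>2 - 2 * a * b + b\<^sup>2" by (simp add: power2_diff)
  have "0 \<le> (a - b)\<^sup>2" by simp
  moreover have "0 \<le> a * b" using assms by simp
  ultimately show ?thesis unfolding e by linarith
qed

lemma abs_le_normI:
  fixes x y :: real
  assumes "\<bar>x\<bar> \<le> y"
  shows "norm x \<le> norm y"
  using assms by simp

theorem theorem1:
  fixes M :: "'a measure"
    and G :: "nat \<Rightarrow> 'a measure"
    and F :: "'v::euclidean_space \<Rightarrow> real" and gradF :: "'v \<Rightarrow> 'v"
    and L c :: real and wstar w1 :: 'v
    and g :: "'v \<Rightarrow> 'x \<Rightarrow> 'v"
    and \<xi> :: "nat \<Rightarrow> 'a \<Rightarrow> 'x" and q :: "nat \<Rightarrow> 'a \<Rightarrow> real" and \<epsilon> :: "nat \<Rightarrow> 'a \<Rightarrow> 'v"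
    and w :: "nat \<Rightarrow> 'a \<Rightarrow> 'v"
    and qmin qmax \<mu> \<mu>G Mt MV \<alpha> :: real
  defines "gt \<equiv> (\<lambda>k \<omega>. q k \<omega> *\<^sub>R g (w k \<omega>) (\<xi> k \<omega>) + \<epsilon> k \<omega>)"
  defines "Fstar \<equiv> F wstar"
  defines "\<mu>q \<equiv> qmin * \<mu>"
  defines "MG \<equiv> MV + qmax\<^sup>2 * \<mu>G\<^sup>2"
  assumes M: "prob_space M"
    and grad: "\<And>v. (F has_derivative (\<lambda>h. gradF v \<bullet> h)) (at v)"
    and L_pos: "L > 0"
    and lip: "\<And>v u. norm (gradF v - gradF u) \<le> L * norm (v - u)"
    and c_pos: "c > 0"
    and strong: "\<And>v u. F u \<ge> F v + gradF v \<bullet> (u - v) + c / 2 * (norm (u - v))\<^sup>2"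
    and wstar_min: "\<And>v. F wstar \<le> F v"
    and q_range: "0 < qmin" "qmin \<le> qmax" "qmax \<le> 1"
    and q_bounds: "\<And>k \<omega>. \<omega> \<in> space M \<Longrightarrow> qmin \<le> q k \<omega> \<and> q k \<omega> \<le> qmax"
    and G_sub: "\<And>k. subalgebra M (G k)"
    and w_meas: "\<And>k. k \<ge> 1 \<Longrightarrow> w k \<in> borel_measurable (G k)"
    and gt_meas: "\<And>k. k \<ge> 1 \<Longrightarrow> gt k \<in> borel_measurable M"
    and gt_int: "\<And>k. k \<ge> 1 \<Longrightarrow> integrable M (\<lambda>\<omega>. (norm (gt k \<omega>))\<^sup>2)"
    and F_int: "\<And>k. k \<ge> 1 \<Longrightarrow> integrable M (\<lambda>\<omega>. F (w k \<omega>))"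
    and w_init: "\<And>\<omega>. \<omega> \<in> space M \<Longrightarrow> w 1 \<omega> = w1"
    and w_step: "\<And>k \<omega>. k \<ge> 1 \<Longrightarrow> \<omega> \<in> space M \<Longrightarrow> w (Suc k) \<omega> = w k \<omega> - \<alpha> *\<^sub>R gt k \<omega>"
    and open_set: "\<exists>S. open S \<and> (\<forall>k\<ge>1. \<forall>\<omega>\<in>space M. w k \<omega> \<in> S) \<and> (\<forall>v\<in>S. F v \<ge> Fstar)"
    and mu: "\<mu> > 0" "\<mu>G \<ge> \<mu>"
    and first_moment: "\<And>k. k \<ge> 1 \<Longrightarrow> AE \<omega> in M.
          gradF (w k \<omega>) \<bullet> vcond_exp M (G k) (gt k) \<omega> \<ge> qmin * \<mu> * (norm (gradF (w k \<omega>)))\<^sup>2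
        \<and> norm (vcond_exp M (G k) (gt k) \<omega>) \<le> qmax * \<mu>G * norm (gradF (w k \<omega>))"
    and MV: "Mt \<ge> 0" "MV \<ge> 0"
    and second_moment: "\<And>k. k \<ge> 1 \<Longrightarrow> AE \<omega> in M.
          real_cond_exp M (G k) (\<lambda>x. (norm (gt k x))\<^sup>2) \<omega> - (norm (vcond_exp M (G k) (gt k) \<omega>))\<^sup>2
            \<le> Mt + MV * (norm (gradF (w k \<omega>)))\<^sup>2"
    and step: "0 < \<alpha>" "\<alpha> \<le> \<mu>q / (L * MG)"
  shows "(\<forall>k\<ge>1. integral\<^sup>L M (\<lambda>\<omega>. F (w k \<omega>) - Fstar)
              \<le> \<alpha> * L * Mt / (2 * c * \<mu>q)
                 + (1 - \<alpha> * c * \<mu>q) ^ (k - 1) * (F w1 - Fstar - \<alpha> * L * Mt / (2 * c * \<mu>q)))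
       \<and> ((\<lambda>k. \<alpha> * L * Mt / (2 * c * \<mu>q)
                 + (1 - \<alpha> * c * \<mu>q) ^ (k - 1) * (F w1 - Fstar - \<alpha> * L * Mt / (2 * c * \<mu>q)))
            \<longlonglongrightarrow> \<alpha> * L * Mt / (2 * c * \<mu>q))
       \<and> \<alpha> * L * Mt / (2 * c * \<mu>q) = 1 / qmin * (\<alpha> * L * Mt / (2 * c * \<mu>))"
proof -
  interpret P: prob_space M by (rule M)
  note [simp] = P.prob_space
  have sfs: "sigma_finite_subalgebra M (G k)" for k
    by (rule finite_measure_subalgebra_is_sigma_finite)
       (simp add: finite_measure_subalgebra_def finite_measure_subalgebra_axioms_def G_sub P.finite_measure_axioms)
  have "L-lipschitz_on UNIV gradF"
    by (rule lipschitz_onI) (use lip L_pos in \<open>auto simp: dist_norm\<close>)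
  then have cont_g: "continuous_on UNIV gradF" by (rule lipschitz_on_continuous_on)
  have cont_F: "continuous_on UNIV F"
    by (intro continuous_at_imp_continuous_on ballI has_derivative_continuous[OF grad])
  have cL: "c \<le> L" by (rule c_le_L[OF grad lip strong])
  have muq_pos: "\<mu>q > 0" unfolding \<mu>q_def using q_range mu by simp
  have MG_ge: "MG \<ge> \<mu>q\<^sup>2"
  proof -
    have "qmin * \<mu> \<le> qmax * \<mu>G" using q_range mu by (intro mult_mono) auto
    then have "(qmin * \<mu>)\<^sup>2 \<le> (qmax * \<mu>G)\<^sup>2" using q_range mu by (intro power_mono) auto
    then show ?thesis unfolding MG_def \<mu>q_def using MV by (simp add: power_mult_distrib)
  qed
  have MG_pos: "MG > 0" using MG_ge muq_pos by (smt (verit) zero_less_power)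
  have aLMG: "\<alpha> * L * MG \<le> \<mu>q"
    using step(2) L_pos MG_pos by (simp add: le_divide_eq mult.assoc)
  define a where "a = \<alpha> * c * \<mu>q"
  define B where "B = \<alpha> * L * Mt / (2 * c * \<mu>q)"
  have a_pos: "a > 0" unfolding a_def using step c_pos muq_pos by simp
  have a_le: "a \<le> 1"
  proof -
    have "a \<le> \<alpha> * L * \<mu>q" unfolding a_def using cL step muq_pos
      by (intro mult_right_mono mult_left_mono) auto
    moreover have "\<alpha> * L * \<mu>q * \<mu>q \<le> \<alpha> * L * MG"
      using MG_ge step L_pos by (simp add: power2_eq_square mult.assoc)
    ultimately have "a * \<mu>q \<le> \<mu>q" using aLMG muq_pos
      by (smt (verit) mult_right_mono less_imp_le)
    then show ?thesis using muq_pos by simp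
  qed
  have aB: "a * B = \<alpha>\<^sup>2 * L * Mt / 2"
    unfolding a_def B_def using c_pos muq_pos by (simp add: power2_eq_square field_simps)
  have intE: "(\<integral>\<omega>. F (w k \<omega>) - Fstar \<partial>M) = (\<integral>\<omega>. F (w k \<omega>) \<partial>M) - Fstar" if k: "k \<ge> 1" for k
    using F_int[OF k] by simp
  have step_k: "(\<integral>\<omega>. F (w (Suc k) \<omega>) \<partial>M) - Fstar
      \<le> (1 - a) * ((\<integral>\<omega>. F (w k \<omega>) \<partial>M) - Fstar) + \<alpha>\<^sup>2 * L * Mt / 2" if k: "k \<ge> 1" for k
  proof -
    interpret S: sigma_finite_subalgebra M "G k" by (rule sfs)
    have wM[measurable]: "w k \<in> borel_measurable M" by (rule measurable_from_subalg[OF G_sub w_meas[OF k]])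
    have wG[measurable]: "w k \<in> borel_measurable (G k)" using w_meas[OF k] .
    have gtM[measurable]: "gt k \<in> borel_measurable M" using gt_meas[OF k] .
    have gM[measurable]: "(\<lambda>\<omega>. gradF (w k \<omega>)) \<in> borel_measurable M"
      by (rule borel_measurable_continuous_on[OF cont_g wM])
    have gG[measurable]: "(\<lambda>\<omega>. gradF (w k \<omega>)) \<in> borel_measurable (G k)"
      by (rule borel_measurable_continuous_on[OF cont_g wG])
    have intF: "integrable M (\<lambda>\<omega>. F (w k \<omega>))" using F_int[OF k] .
    have intF1: "integrable M (\<lambda>\<omega>. F (w (Suc k) \<omega>))" using F_int k by simp
    have intgt2: "integrable M (\<lambda>\<omega>. (norm (gt k \<omega>))\<^sup>2)" using gt_int[OF k] .
    have intbF: "integrable M (\<lambda>\<omega>. 2 * L * (F (w k \<omega>) - Fstar))" using intF by auto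
    have intg2: "integrable M (\<lambda>\<omega>. (norm (gradF (w k \<omega>)))\<^sup>2)"
    proof (rule Bochner_Integration.integrable_bound[OF intbF])
      show "(\<lambda>\<omega>. (norm (gradF (w k \<omega>)))\<^sup>2) \<in> borel_measurable M" by measurable
      show "AE \<omega> in M. norm ((norm (gradF (w k \<omega>)))\<^sup>2) \<le> norm (2 * L * (F (w k \<omega>) - Fstar))"
      proof (intro AE_I2 abs_le_normI)
        fix \<omega>
        show "\<bar>(norm (gradF (w k \<omega>)))\<^sup>2\<bar> \<le> 2 * L * (F (w k \<omega>) - Fstar)"
          using grad_sq_bound[OF grad lip L_pos wstar_min] unfolding Fstar_def by simp
      qed
    qed
    define bnd where "bnd = (\<lambda>\<omega>. (norm (gradF (w k \<omega>)))\<^sup>2 + (norm (gt k \<omega>))\<^sup>2)"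
    have intbnd: "integrable M bnd" unfolding bnd_def using intg2 intgt2 by simp
    have bnd_nn: "0 \<le> bnd \<omega>" for \<omega> unfolding bnd_def by simp
    have intinner: "integrable M (\<lambda>\<omega>. gradF (w k \<omega>) \<bullet> gt k \<omega>)"
    proof (rule Bochner_Integration.integrable_bound[OF intbnd])
      show "(\<lambda>\<omega>. gradF (w k \<omega>) \<bullet> gt k \<omega>) \<in> borel_measurable M" by measurable
      show "AE \<omega> in M. norm (gradF (w k \<omega>) \<bullet> gt k \<omega>) \<le> norm (bnd \<omega>)"
        using inner_abs_bound bnd_nn unfolding bnd_def by (intro AE_I2) simp
    qed
    have intb: "integrable M (\<lambda>\<omega>. (gradF (w k \<omega>) \<bullet> b) * (gt k \<omega> \<bullet> b))" if b: "b \<in> Basis" for b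
    proof (rule Bochner_Integration.integrable_bound[OF intbnd])
      show "(\<lambda>\<omega>. (gradF (w k \<omega>) \<bullet> b) * (gt k \<omega> \<bullet> b)) \<in> borel_measurable M" by measurable
      show "AE \<omega> in M. norm ((gradF (w k \<omega>) \<bullet> b) * (gt k \<omega> \<bullet> b)) \<le> norm (bnd \<omega>)"
      proof (intro AE_I2 abs_le_normI)
        fix \<omega>
        have "\<bar>(gradF (w k \<omega>) \<bullet> b) * (gt k \<omega> \<bullet> b)\<bar> = \<bar>gradF (w k \<omega>) \<bullet> b\<bar> * \<bar>gt k \<omega> \<bullet> b\<bar>"
          by (simp add: abs_mult)
        also have "\<dots> \<le> norm (gradF (w k \<omega>)) * norm (gt k \<omega>)"
          using b by (intro mult_mono Basis_le_norm) auto
        also have "\<dots> \<le> bnd \<omega>" unfolding bnd_def by (rule norm_prod_bound) auto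
        finally show "\<bar>(gradF (w k \<omega>) \<bullet> b) * (gt k \<omega> \<bullet> b)\<bar> \<le> bnd \<omega>" .
      qed
    qed
    have ce: "integrable M (\<lambda>\<omega>. (gradF (w k \<omega>) \<bullet> b) * real_cond_exp M (G k) (\<lambda>x. gt k x \<bullet> b) \<omega>)"
       "(\<integral>\<omega>. (gradF (w k \<omega>) \<bullet> b) * real_cond_exp M (G k) (\<lambda>x. gt k x \<bullet> b) \<omega> \<partial>M)
        = (\<integral>\<omega>. (gradF (w k \<omega>) \<bullet> b) * (gt k \<omega> \<bullet> b) \<partial>M)" if b: "b \<in> Basis" for b
      using S.real_cond_exp_intg[of "\<lambda>\<omega>. gradF (w k \<omega>) \<bullet> b" "\<lambda>\<omega>. gt k \<omega> \<bullet> b", OF intb[OF b]]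
      by auto
    have vc_exp: "gradF (w k \<omega>) \<bullet> vcond_exp M (G k) (gt k) \<omega>
        = (\<Sum>b\<in>Basis. (gradF (w k \<omega>) \<bullet> b) * real_cond_exp M (G k) (\<lambda>x. gt k x \<bullet> b) \<omega>)" for \<omega>
      unfolding vcond_exp_def by (simp add: inner_sum_right mult.commute)
    have intvc: "integrable M (\<lambda>\<omega>. gradF (w k \<omega>) \<bullet> vcond_exp M (G k) (gt k) \<omega>)"
      unfolding vc_exp using ce(1) by (intro Bochner_Integration.integrable_sum) auto
    have eq1: "(\<integral>\<omega>. gradF (w k \<omega>) \<bullet> vcond_exp M (G k) (gt k) \<omega> \<partial>M) = (\<integral>\<omega>. gradF (w k \<omega>) \<bullet> gt k \<omega> \<partial>M)"
    proof -
      have "(\<integral>\<omega>. gradF (w k \<omega>) \<bullet> vcond_exp M (G k) (gt k) \<omega> \<partial>M)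
          = (\<Sum>b\<in>Basis. (\<integral>\<omega>. (gradF (w k \<omega>) \<bullet> b) * real_cond_exp M (G k) (\<lambda>x. gt k x \<bullet> b) \<omega> \<partial>M))"
        unfolding vc_exp using ce(1) by (intro Bochner_Integration.integral_sum) auto
      also have "\<dots> = (\<Sum>b\<in>Basis. (\<integral>\<omega>. (gradF (w k \<omega>) \<bullet> b) * (gt k \<omega> \<bullet> b) \<partial>M))"
        using ce(2) by (intro sum.cong) auto
      also have "\<dots> = (\<integral>\<omega>. (\<Sum>b\<in>Basis. (gradF (w k \<omega>) \<bullet> b) * (gt k \<omega> \<bullet> b)) \<partial>M)"
        using intb by (intro Bochner_Integration.integral_sum[symmetric]) auto
      also have "\<dots> = (\<integral>\<omega>. gradF (w k \<omega>) \<bullet> gt k \<omega> \<partial>M)"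
        by (simp add: euclidean_inner[symmetric])
      finally show ?thesis .
    qed
    define N where "N = (\<integral>\<omega>. (norm (gradF (w k \<omega>)))\<^sup>2 \<partial>M)"
    define I where "I = (\<integral>\<omega>. gradF (w k \<omega>) \<bullet> gt k \<omega> \<partial>M)"
    define T where "T = (\<integral>\<omega>. (norm (gt k \<omega>))\<^sup>2 \<partial>M)"
    define E0 where "E0 = (\<integral>\<omega>. F (w k \<omega>) \<partial>M)"
    define E1 where "E1 = (\<integral>\<omega>. F (w (Suc k) \<omega>) \<partial>M)"
    have N_nn: "N \<ge> 0" unfolding N_def by simp
    have D: "\<mu>q * N \<le> I"
    proof -
      have "\<mu>q * N = (\<integral>\<omega>. \<mu>q * (norm (gradF (w k \<omega>)))\<^sup>2 \<partial>M)" unfolding N_def by simp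
      also have "\<dots> \<le> (\<integral>\<omega>. gradF (w k \<omega>) \<bullet> vcond_exp M (G k) (gt k) \<omega> \<partial>M)"
        using intg2 intvc first_moment[OF k] unfolding \<mu>q_def
        by (intro integral_mono_AE) (auto elim!: AE_mp intro!: AE_I2)
      finally show ?thesis unfolding I_def eq1 .
    qed
    have E: "T \<le> Mt + MG * N"
    proof -
      have "T = (\<integral>\<omega>. real_cond_exp M (G k) (\<lambda>x. (norm (gt k x))\<^sup>2) \<omega> \<partial>M)"
        unfolding T_def using S.real_cond_exp_int(2)[OF intgt2] by simp
      also have "\<dots> \<le> (\<integral>\<omega>. Mt + MG * (norm (gradF (w k \<omega>)))\<^sup>2 \<partial>M)"
      proof (intro integral_mono_AE)
        show "integrable M (real_cond_exp M (G k) (\<lambda>x. (norm (gt k x))\<^sup>2))"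
          using S.real_cond_exp_int(1)[OF intgt2] .
        show "integrable M (\<lambda>\<omega>. Mt + MG * (norm (gradF (w k \<omega>)))\<^sup>2)" using intg2 by simp
        show "AE \<omega> in M. real_cond_exp M (G k) (\<lambda>x. (norm (gt k x))\<^sup>2) \<omega> \<le> Mt + MG * (norm (gradF (w k \<omega>)))\<^sup>2"
          using first_moment[OF k] second_moment[OF k]
        proof eventually_elim
          case (elim \<omega>)
          have "(norm (vcond_exp M (G k) (gt k) \<omega>))\<^sup>2 \<le> (qmax * \<mu>G * norm (gradF (w k \<omega>)))\<^sup>2"
            using elim(1) by (intro power_mono) auto
          then have "(norm (vcond_exp M (G k) (gt k) \<omega>))\<^sup>2 \<le> qmax\<^sup>2 * \<mu>G\<^sup>2 * (norm (gradF (w k \<omega>)))\<^sup>2"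
            by (simp add: power_mult_distrib)
          then show ?case using elim(2) unfolding MG_def by (simp add: algebra_simps)
        qed
      qed
      also have "\<dots> = Mt + MG * N" unfolding N_def using intg2 by simp
      finally show ?thesis .
    qed
    have A: "E1 \<le> E0 - \<alpha> * I + \<alpha>\<^sup>2 * L / 2 * T"
    proof -
      have "E1 \<le> (\<integral>\<omega>. F (w k \<omega>) - \<alpha> * (gradF (w k \<omega>) \<bullet> gt k \<omega>) + \<alpha>\<^sup>2 * L / 2 * (norm (gt k \<omega>))\<^sup>2 \<partial>M)"
        unfolding E1_def
      proof (rule integral_mono[OF intF1])
        show "integrable M (\<lambda>\<omega>. F (w k \<omega>) - \<alpha> * (gradF (w k \<omega>) \<bullet> gt k \<omega>) + \<alpha>\<^sup>2 * L / 2 * (norm (gt k \<omega>))\<^sup>2)"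
          using intF intinner intgt2 by simp
        fix \<omega> assume \<omega>: "\<omega> \<in> space M"
        have "F (w (Suc k) \<omega>) = F (w k \<omega> - \<alpha> *\<^sub>R gt k \<omega>)" using w_step[OF k \<omega>] by simp
        also have "\<dots> \<le> F (w k \<omega>) + gradF (w k \<omega>) \<bullet> ((w k \<omega> - \<alpha> *\<^sub>R gt k \<omega>) - w k \<omega>)
            + L / 2 * (norm ((w k \<omega> - \<alpha> *\<^sub>R gt k \<omega>) - w k \<omega>))\<^sup>2"
          by (rule descent[OF grad lip])
        also have "\<dots> = F (w k \<omega>) - \<alpha> * (gradF (w k \<omega>) \<bullet> gt k \<omega>) + \<alpha>\<^sup>2 * L / 2 * (norm (gt k \<omega>))\<^sup>2"
          using step(1) by (simp add: power_mult_distrib)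
        finally show "F (w (Suc k) \<omega>) \<le> F (w k \<omega>) - \<alpha> * (gradF (w k \<omega>) \<bullet> gt k \<omega>) + \<alpha>\<^sup>2 * L / 2 * (norm (gt k \<omega>))\<^sup>2" .
      qed
      also have "\<dots> = E0 - \<alpha> * I + \<alpha>\<^sup>2 * L / 2 * T"
        unfolding E0_def I_def T_def using intF intinner intgt2 by simp
      finally show ?thesis .
    qed
    have PL: "2 * c * (E0 - Fstar) \<le> N"
    proof -
      have "2 * c * (E0 - Fstar) = (\<integral>\<omega>. 2 * c * (F (w k \<omega>) - Fstar) \<partial>M)"
        unfolding E0_def using intF by simp
      also have "\<dots> \<le> N" unfolding N_def
        using intF intg2 pl_ineq[OF strong c_pos] unfolding Fstar_def
        by (intro integral_mono) auto
      finally show ?thesis .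
    qed
    have s1: "\<alpha> * (\<mu>q * N) \<le> \<alpha> * I" using D step(1) by (intro mult_left_mono) auto
    have s2: "\<alpha>\<^sup>2 * L / 2 * T \<le> \<alpha>\<^sup>2 * L / 2 * (Mt + MG * N)"
      using E L_pos by (intro mult_left_mono) auto
    have s3: "(\<alpha> * L * MG) * (\<alpha> * N / 2) \<le> \<mu>q * (\<alpha> * N / 2)"
      using aLMG step(1) N_nn by (intro mult_right_mono) auto
    have s4: "(\<alpha> * \<mu>q / 2) * (2 * c * (E0 - Fstar)) \<le> (\<alpha> * \<mu>q / 2) * N"
      using PL step(1) muq_pos by (intro mult_left_mono) auto
    have "E1 - Fstar \<le> (1 - a) * (E0 - Fstar) + \<alpha>\<^sup>2 * L * Mt / 2"
    proof -
      have e2: "\<alpha>\<^sup>2 * L / 2 * (Mt + MG * N) = \<alpha>\<^sup>2 * L * Mt / 2 + (\<alpha> * L * MG) * (\<alpha> * N / 2)"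
        by (simp add: power2_eq_square algebra_simps)
      have e3: "(1 - a) * (E0 - Fstar) = E0 - Fstar - (\<alpha> * \<mu>q / 2) * (2 * c * (E0 - Fstar))"
        unfolding a_def by (simp add: algebra_simps)
      have e4: "\<mu>q * (\<alpha> * N / 2) = \<alpha> * (\<mu>q * N) - (\<alpha> * \<mu>q / 2) * N" by (simp add: algebra_simps)
      show ?thesis using A s1 s2 s3 s4 e2 e3 e4 by linarith
    qed
    then show ?thesis unfolding E0_def E1_def .
  qed
  define e where "e k = (\<integral>\<omega>. F (w k \<omega>) \<partial>M) - Fstar" for k
  have e1: "e 1 = F w1 - Fstar"
  proof -
    have "(\<integral>\<omega>. F (w 1 \<omega>) \<partial>M) = (\<integral>\<omega>. F w1 \<partial>M)"
      using w_init by (intro Bochner_Integration.integral_cong) auto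
    then show ?thesis unfolding e_def by simp
  qed
  have bound: "e (Suc m) \<le> B + (1 - a) ^ m * (e 1 - B)" for m
  proof (induction m)
    case 0
    then show ?case by simp
  next
    case (Suc m)
    have "e (Suc (Suc m)) \<le> (1 - a) * e (Suc m) + a * B"
      using step_k[of "Suc m"] aB unfolding e_def by simp
    also have "\<dots> \<le> (1 - a) * (B + (1 - a) ^ m * (e 1 - B)) + a * B"
      using Suc.IH a_le by (intro add_right_mono mult_left_mono) auto
    also have "\<dots> = B + (1 - a) ^ Suc m * (e 1 - B)" by (simp add: algebra_simps)
    finally show ?case .
  qed
  have part1: "\<forall>k\<ge>1. integral\<^sup>L M (\<lambda>\<omega>. F (w k \<omega>) - Fstar)
              \<le> \<alpha> * L * Mt / (2 * c * \<mu>q)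
                 + (1 - \<alpha> * c * \<mu>q) ^ (k - 1) * (F w1 - Fstar - \<alpha> * L * Mt / (2 * c * \<mu>q))"
  proof (intro allI impI)
    fix k :: nat assume k: "k \<ge> 1"
    then obtain m where m: "k = Suc m" by (cases k) auto
    show "integral\<^sup>L M (\<lambda>\<omega>. F (w k \<omega>) - Fstar)
              \<le> \<alpha> * L * Mt / (2 * c * \<mu>q)
                 + (1 - \<alpha> * c * \<mu>q) ^ (k - 1) * (F w1 - Fstar - \<alpha> * L * Mt / (2 * c * \<mu>q))"
      using bound[of m] intE[OF k] e1 unfolding m e_def a_def B_def by simp
  qed
  have part2: "(\<lambda>k. \<alpha> * L * Mt / (2 * c * \<mu>q)
                 + (1 - \<alpha> * c * \<mu>q) ^ (k - 1) * (F w1 - Fstar - \<alpha> * L * Mt / (2 * c * \<mu>q)))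
            \<longlonglongrightarrow> \<alpha> * L * Mt / (2 * c * \<mu>q)"
  proof -
    have pw: "(\<lambda>n. (1 - a) ^ n) \<longlonglongrightarrow> 0" using a_pos a_le by (intro LIMSEQ_realpow_zero) auto
    then have "(\<lambda>n. B + (1 - a) ^ n * (F w1 - Fstar - B)) \<longlonglongrightarrow> B + 0 * (F w1 - Fstar - B)"
      by (intro tendsto_add tendsto_const tendsto_mult_right pw)
    then have "(\<lambda>n. B + (1 - a) ^ (Suc n - 1) * (F w1 - Fstar - B)) \<longlonglongrightarrow> B" by simp
    then have "(\<lambda>n. B + (1 - a) ^ (n - 1) * (F w1 - Fstar - B)) \<longlonglongrightarrow> B"
      by (rule LIMSEQ_imp_Suc[where f="\<lambda>n. B + (1 - a) ^ (n - 1) * (F w1 - Fstar - B)"])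
    then show ?thesis unfolding a_def B_def .
  qed
  have part3: "\<alpha> * L * Mt / (2 * c * \<mu>q) = 1 / qmin * (\<alpha> * L * Mt / (2 * c * \<mu>))"
    unfolding \<mu>q_def by simp
  show ?thesis using part1 part2 part3 by blast
qed

end
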